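(* Let $\bm\sigma=\sigma_1\bm e_1+\dots+\sigma_r\bm e_r\in\mathbb{Z}^r$ be a changemaker vector with $\sigma_r\ge 3$ and $n=\bm\sigma\cdot\bm\sigma$, and let $L=\langle\bm\sigma\rangle^\perp\subseteq\mathbb{Z}^r$ be the corresponding $n$-changemaker lattice. If $L$ admits an obtuse superbase, then \[ n\le 4+\frac32\sum_{i=1}^r\sigma_i(\sigma_i-1). \]
   Context: $\mathbb{Z}^r$ carries the standard Euclidean pairing with orthonormal basis $\bm e_1,\dots,\bm e_r$. A changemaker vector is $\bm\sigma=\sum\sigma_i\bm e_i$ with $\sigma_1=1$ and $\sigma_{i-1}\le\sigma_i\le 1+\sigma_1+\dots+\sigma_{i-1}$ for $i=2,\dots,r$. For an integral lattice $L$ of rank $k$ (free abelian group with symmetric positive definite integral bilinear form), an obtuse superbase is a set $\{v_0,\dots,v_k\}\subseteq L$ that spans $L$, satisfies $v_i\cdot v_j\le0$ for $i\ne j$, and $v_0+\dots+v_k=0$. *)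

theory Defs
  imports Complex_Main
begin

text \<open>Vectors of the integer lattice Z^r are modelled as functions nat => int
  supported on the coordinates 1..r (coordinate i is the coefficient of e_i).\<close>

definition zvec :: "nat \<Rightarrow> (nat \<Rightarrow> int) set" where
  "zvec r = {x. \<forall>i. (i < 1 \<or> r < i) \<longrightarrow> x i = 0}"

definition dot :: "nat \<Rightarrow> (nat \<Rightarrow> int) \<Rightarrow> (nat \<Rightarrow> int) \<Rightarrow> int" where
  "dot r x y = (\<Sum>i=1..r. x i * y i)"

definition changemaker :: "nat \<Rightarrow> (nat \<Rightarrow> int) \<Rightarrow> bool" where
  "changemaker r \<sigma> \<longleftrightarrow> 1 \<le> r \<and> \<sigma> \<in> zvec r \<and> \<sigma> 1 = 1 \<and>
     (\<forall>i\<in>{2..r}. \<sigma> (i - 1) \<le> \<sigma> i \<and> \<sigma> i \<le> 1 + (\<Sum>j=1..i-1. \<sigma> j))"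

definition cm_lattice :: "nat \<Rightarrow> (nat \<Rightarrow> int) \<Rightarrow> (nat \<Rightarrow> int) set" where
  "cm_lattice r \<sigma> = {x \<in> zvec r. dot r x \<sigma> = 0}"

definition int_span :: "nat set \<Rightarrow> (nat \<Rightarrow> nat \<Rightarrow> int) \<Rightarrow> (nat \<Rightarrow> int) set" where
  "int_span I v = {x. \<exists>c::nat \<Rightarrow> int. x = (\<lambda>j. \<Sum>i\<in>I. c i * v i j)}"

definition lattice_rank :: "(nat \<Rightarrow> int) set \<Rightarrow> nat \<Rightarrow> bool" where
  "lattice_rank L k \<longleftrightarrow> (\<exists>b::nat \<Rightarrow> nat \<Rightarrow> int.
      int_span {..<k} b = L \<and>
      (\<forall>c::nat \<Rightarrow> int. (\<lambda>j. \<Sum>i<k. c i * b i j) = (\<lambda>_. 0) \<longrightarrow> (\<forall>i<k. c i = 0)))"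

definition obtuse_superbase ::
    "nat \<Rightarrow> (nat \<Rightarrow> int) set \<Rightarrow> nat \<Rightarrow> (nat \<Rightarrow> nat \<Rightarrow> int) \<Rightarrow> bool" where
  "obtuse_superbase r L k v \<longleftrightarrow>
     (\<forall>i\<le>k. v i \<in> L) \<and> int_span {..k} v = L \<and>
     (\<forall>i\<le>k. \<forall>j\<le>k. i \<noteq> j \<longrightarrow> dot r (v i) (v j) \<le> 0) \<and>
     (\<lambda>j. \<Sum>i\<le>k. v i j) = (\<lambda>_. 0)"

definition admits_obtuse_superbase :: "nat \<Rightarrow> (nat \<Rightarrow> int) set \<Rightarrow> bool" where
  "admits_obtuse_superbase r L \<longleftrightarrow>
     (\<exists>k v. lattice_rank L k \<and> obtuse_superbase r L k v)"

end

theory Submission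
  imports Defs
begin


definition comb :: "nat set \<Rightarrow> (nat \<Rightarrow> int) \<Rightarrow> (nat \<Rightarrow> nat \<Rightarrow> int) \<Rightarrow> (nat \<Rightarrow> int)" where
  "comb K a v = (\<lambda>j. \<Sum>i\<in>K. a i * v i j)"

lemma dot_comb:
  assumes "finite K"
  shows "dot r (comb K a v) (comb K b v) = (\<Sum>i\<in>K. \<Sum>i'\<in>K. a i * b i' * dot r (v i) (v i'))"
proof -
  have "dot r (comb K a v) (comb K b v) = (\<Sum>j=1..r. \<Sum>i\<in>K. \<Sum>i'\<in>K. a i * b i' * (v i j * v i' j))"
    unfolding dot_def comb_def by (simp add: sum_product mult_ac)
  also have "\<dots> = (\<Sum>i\<in>K. \<Sum>j=1..r. \<Sum>i'\<in>K. a i * b i' * (v i j * v i' j))"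
    by (rule sum.swap)
  also have "\<dots> = (\<Sum>i\<in>K. \<Sum>i'\<in>K. \<Sum>j=1..r. a i * b i' * (v i j * v i' j))"
    by (rule sum.cong[OF refl], rule sum.swap)
  also have "\<dots> = (\<Sum>i\<in>K. \<Sum>i'\<in>K. a i * b i' * dot r (v i) (v i'))"
    by (simp add: dot_def sum_distrib_left)
  finally show ?thesis .
qed

lemma dot_sym: "dot r x y = dot r y x"
  unfolding dot_def by (simp add: mult.commute)

lemma rowsum:
  assumes "finite K" and sum0: "(\<lambda>j. \<Sum>i\<in>K. v i j) = (\<lambda>_. 0)"
  shows "(\<Sum>i'\<in>K. dot r (v i) (v i')) = 0"
proof -
  have "(\<Sum>i'\<in>K. dot r (v i) (v i')) = (\<Sum>j=1..r. v i j * (\<Sum>i'\<in>K. v i' j))"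
    unfolding dot_def by (simp add: sum_distrib_left sum.swap[of _ K])
  also have "\<dots> = 0" using fun_cong[OF sum0] by simp
  finally show ?thesis .
qed

lemma norm_diff:
  assumes "finite K" and sum0: "(\<lambda>j. \<Sum>i\<in>K. v i j) = (\<lambda>_. 0)"
  shows "2 * dot r (comb K f v) (comb K f v) =
     - (\<Sum>i\<in>K. \<Sum>i'\<in>K. dot r (v i) (v i') * (f i - f i')^2)"
proof -
  let ?G = "\<lambda>i i'. dot r (v i) (v i')"
  have e: "?G i i' * (f i - f i')^2 = f i ^2 * ?G i i' + f i' ^2 * ?G i' i - 2 * (f i * f i' * ?G i i')" for i i'
    by (simp add: power2_eq_square algebra_simps dot_sym[of r "v i'"])
  have A: "(\<Sum>i\<in>K. \<Sum>i'\<in>K. f i ^2 * ?G i i') = 0"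
    using rowsum[OF assms] by (simp add: sum_distrib_left[symmetric])
  have B: "(\<Sum>i\<in>K. \<Sum>i'\<in>K. f i' ^2 * ?G i' i) = 0"
    using A by (subst sum.swap) simp
  have "(\<Sum>i\<in>K. \<Sum>i'\<in>K. ?G i i' * (f i - f i')^2) =
     (\<Sum>i\<in>K. \<Sum>i'\<in>K. f i ^2 * ?G i i') + (\<Sum>i\<in>K. \<Sum>i'\<in>K. f i' ^2 * ?G i' i)
     - 2 * (\<Sum>i\<in>K. \<Sum>i'\<in>K. f i * f i' * ?G i i')"
    by (simp add: e sum.distrib sum_subtractf sum_distrib_left)
  then show ?thesis using A B dot_comb[OF assms(1), of r f v f] by simp
qed



definition Fp :: "nat set \<Rightarrow> (nat \<Rightarrow> nat \<Rightarrow> int) \<Rightarrow> nat \<Rightarrow> (nat \<Rightarrow> int) \<Rightarrow> int" where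
  "Fp K v r f = (\<Sum>i\<in>K. \<Sum>i'\<in>K. (- dot r (v i) (v i')) * (if odd (f i - f i') then 1 else 0))"

lemma bits:
  fixes p q s d :: int
  shows "(if odd p then 1 else 0) + (if odd q then 1 else 0) + (if odd s then 1 else 0)
     + (if odd (p + q + s + 2 * d) then 1 else 0)
   \<ge> (if odd (p + q) then 1 else 0) + (if odd (p + s) then 1 else 0) + (if odd (q + s) then (1::int) else 0)"
  by (cases "even p"; cases "even q"; cases "even s"; simp)

lemma sq_ge_odd: "(x::int)^2 \<ge> (if odd x then 1 else 0)"
proof (cases "odd x")
  case True then have "x \<noteq> 0" by auto
  then have "x^2 > 0" by simp
  then have "x^2 \<ge> 1" by linarith
  with True show ?thesis by simp
qed simp

lemma Fp_le:
  assumes "finite K" and sum0: "(\<lambda>j. \<Sum>i\<in>K. v i j) = (\<lambda>_. 0)"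
    and obt: "\<forall>i\<in>K. \<forall>i'\<in>K. i \<noteq> i' \<longrightarrow> dot r (v i) (v i') \<le> 0"
  shows "Fp K v r f \<le> 2 * dot r (comb K f v) (comb K f v)"
proof -
  have "Fp K v r f \<le> (\<Sum>i\<in>K. \<Sum>i'\<in>K. (- dot r (v i) (v i')) * (f i - f i')^2)"
    unfolding Fp_def
  proof (intro sum_mono)
    fix i i' assume "i \<in> K" "i' \<in> K"
    show "(- dot r (v i) (v i')) * (if odd (f i - f i') then 1 else 0) \<le> (- dot r (v i) (v i')) * (f i - f i')^2"
    proof (cases "i = i'")
      case False
      then have "- dot r (v i) (v i') \<ge> 0" using obt \<open>i \<in> K\<close> \<open>i' \<in> K\<close> by auto
      then show ?thesis by (intro mult_left_mono sq_ge_odd)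
    qed simp
  qed
  also have "\<dots> = 2 * dot r (comb K f v) (comb K f v)"
    using norm_diff[OF assms(1,2), of r f] by (simp add: sum_negf)
  finally show ?thesis .
qed

lemma mod2_sq: "((a::int) mod 2 - b mod 2)^2 = (if odd (a - b) then 1 else 0)"
proof -
  have ha: "a mod 2 = (if even a then 0 else 1)" by (simp add: even_iff_mod_2_eq_zero odd_iff_mod_2_eq_one)
  have hb: "b mod 2 = (if even b then 0 else 1)" by (simp add: even_iff_mod_2_eq_zero odd_iff_mod_2_eq_one)
  show ?thesis by (cases "even a"; cases "even b"; simp add: ha hb)
qed

lemma Fp_eq:
  assumes "finite K" and sum0: "(\<lambda>j. \<Sum>i\<in>K. v i j) = (\<lambda>_. 0)"
  shows "2 * dot r (comb K (\<lambda>i. f i mod 2) v) (comb K (\<lambda>i. f i mod 2) v) = Fp K v r f"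
  using norm_diff[OF assms(1,2), of r "\<lambda>i. f i mod 2"]
  unfolding Fp_def by (simp add: mod2_sq sum_negf mult.commute)

lemma Fp_quad:
  assumes "finite K"
    and obt: "\<forall>i\<in>K. \<forall>i'\<in>K. i \<noteq> i' \<longrightarrow> dot r (v i) (v i') \<le> 0"
  shows "Fp K v r (\<lambda>i. a i + b i) + Fp K v r (\<lambda>i. a i + c i) + Fp K v r (\<lambda>i. b i + c i)
    \<le> Fp K v r a + Fp K v r b + Fp K v r c + Fp K v r (\<lambda>i. a i + b i + c i + 2 * d i)"
proof -
  let ?ob = "\<lambda>x::int. if odd x then 1 else (0::int)"
  let ?G = "\<lambda>i i'. - dot r (v i) (v i')"
  have key: "?G i i' * (?ob ((a i + b i) - (a i' + b i')) + ?ob ((a i + c i) - (a i' + c i')) + ?ob ((b i + c i) - (b i' + c i')))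
     \<le> ?G i i' * (?ob (a i - a i') + ?ob (b i - b i') + ?ob (c i - c i') + ?ob ((a i + b i + c i + 2 * d i) - (a i' + b i' + c i' + 2 * d i')))"
    if "i \<in> K" "i' \<in> K" for i i'
  proof (cases "i = i'")
    case False
    then have g: "?G i i' \<ge> 0" using obt that by auto
    have e1: "(a i + b i) - (a i' + b i') = (a i - a i') + (b i - b i')" by simp
    have e2: "(a i + c i) - (a i' + c i') = (a i - a i') + (c i - c i')" by simp
    have e3: "(b i + c i) - (b i' + c i') = (b i - b i') + (c i - c i')" by simp
    have e4: "(a i + b i + c i + 2 * d i) - (a i' + b i' + c i' + 2 * d i') = (a i - a i') + (b i - b i') + (c i - c i') + 2 * (d i - d i')" by (simp add: algebra_simps)
    have "?ob ((a i + b i) - (a i' + b i')) + ?ob ((a i + c i) - (a i' + c i')) + ?ob ((b i + c i) - (b i' + c i'))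
        \<le> ?ob (a i - a i') + ?ob (b i - b i') + ?ob (c i - c i') + ?ob ((a i + b i + c i + 2 * d i) - (a i' + b i' + c i' + 2 * d i'))"
      unfolding e1 e2 e3 e4 by (rule bits)
    with g show ?thesis by (rule mult_left_mono[rotated])
  next
    case True
    then show ?thesis by simp
  qed
  have "(\<Sum>i\<in>K. \<Sum>i'\<in>K. ?G i i' * (?ob ((a i + b i) - (a i' + b i')) + ?ob ((a i + c i) - (a i' + c i')) + ?ob ((b i + c i) - (b i' + c i'))))
     \<le> (\<Sum>i\<in>K. \<Sum>i'\<in>K. ?G i i' * (?ob (a i - a i') + ?ob (b i - b i') + ?ob (c i - c i') + ?ob ((a i + b i + c i + 2 * d i) - (a i' + b i' + c i' + 2 * d i'))))"
    by (rule sum_mono, rule sum_mono, rule key)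
  then show ?thesis unfolding Fp_def
    by (simp only: distrib_left sum.distrib)
qed



lemma span_comb:
  assumes "x \<in> int_span K v"
  obtains a where "x = comb K a v"
  using assms unfolding int_span_def comb_def by blast

lemma comb_in_span: "comb K a v \<in> int_span K v"
  unfolding int_span_def comb_def by blast

lemma zvec_out: "x \<in> zvec r \<Longrightarrow> (j < 1 \<or> r < j) \<Longrightarrow> x j = 0"
  unfolding zvec_def by blast

lemma core:
  assumes osb: "obtuse_superbase r (cm_lattice r \<sigma>) k v"
    and xL: "x \<in> cm_lattice r \<sigma>" and yL: "y \<in> cm_lattice r \<sigma>"
    and zL: "z \<in> cm_lattice r \<sigma>" and wL: "w \<in> cm_lattice r \<sigma>"
    and par: "\<forall>j. even (w j - x j - y j - z j)"
  shows "\<exists>u1 u2 u3. u1 \<in> cm_lattice r \<sigma> \<and> u2 \<in> cm_lattice r \<sigma> \<and> u3 \<in> cm_lattice r \<sigma>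
     \<and> (\<forall>j. even (u1 j - x j - y j)) \<and> (\<forall>j. even (u2 j - x j - z j)) \<and> (\<forall>j. even (u3 j - y j - z j))
     \<and> dot r u1 u1 + dot r u2 u2 + dot r u3 u3 \<le> dot r x x + dot r y y + dot r z z + dot r w w"
proof -
  let ?L = "cm_lattice r \<sigma>"
  let ?K = "{..k}"
  have span: "int_span ?K v = ?L" and obt0: "\<forall>i\<le>k. \<forall>j\<le>k. i \<noteq> j \<longrightarrow> dot r (v i) (v j) \<le> 0"
    and sum0: "(\<lambda>j. \<Sum>i\<le>k. v i j) = (\<lambda>_. 0)"
    using osb unfolding obtuse_superbase_def by auto
  have obt: "\<forall>i\<in>?K. \<forall>i'\<in>?K. i \<noteq> i' \<longrightarrow> dot r (v i) (v i') \<le> 0" using obt0 by auto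
  have fin: "finite ?K" by simp
  obtain a where xa: "x = comb ?K a v" using xL span span_comb by metis
  obtain b where yb: "y = comb ?K b v" using yL span span_comb by metis
  obtain c where zc: "z = comb ?K c v" using zL span span_comb by metis
  define t where "t = (\<lambda>j. (w j - x j - y j - z j) div 2)"
  have t2: "2 * t j = w j - x j - y j - z j" for j
    using par unfolding t_def by auto
  have tz: "t \<in> zvec r"
    using xL yL zL wL unfolding zvec_def cm_lattice_def t_def by auto
  have "2 * dot r t \<sigma> = dot r w \<sigma> - dot r x \<sigma> - dot r y \<sigma> - dot r z \<sigma>"
    unfolding dot_def by (simp add: sum_distrib_left mult.assoc[symmetric] t2 sum_subtractf left_diff_distrib)
  then have "dot r t \<sigma> = 0" using xL yL zL wL unfolding cm_lattice_def by auto
  with tz have tL: "t \<in> ?L" unfolding cm_lattice_def by auto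
  obtain d where td: "t = comb ?K d v" using tL span span_comb by metis
  define e where "e = (\<lambda>i. a i + b i + c i + 2 * d i)"
  have we: "w = comb ?K e v"
  proof
    fix j
    have "w j = x j + y j + z j + 2 * t j" using t2[of j] by simp
    also have "\<dots> = comb ?K e v j"
      unfolding xa yb zc td comb_def e_def
      by (simp add: sum.distrib sum_distrib_left distrib_right mult.assoc)
    finally show "w j = comb ?K e v j" .
  qed
  define u1 where "u1 = comb ?K (\<lambda>i. (a i + b i) mod 2) v"
  define u2 where "u2 = comb ?K (\<lambda>i. (a i + c i) mod 2) v"
  define u3 where "u3 = comb ?K (\<lambda>i. (b i + c i) mod 2) v"
  have inL: "u1 \<in> ?L" "u2 \<in> ?L" "u3 \<in> ?L"
    unfolding u1_def u2_def u3_def using span comb_in_span by metis+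
  have parity: "even (comb ?K (\<lambda>i. (f i + g i) mod 2) v j - comb ?K f v j - comb ?K g v j)" for f g j
  proof -
    have "comb ?K (\<lambda>i. (f i + g i) mod 2) v j - comb ?K f v j - comb ?K g v j
        = (\<Sum>i\<in>?K. ((f i + g i) mod 2 - (f i + g i)) * v i j)"
      unfolding comb_def by (simp add: sum_subtractf left_diff_distrib distrib_right sum.distrib)
    also have "\<dots> = (\<Sum>i\<in>?K. 2 * ((- ((f i + g i) div 2)) * v i j))"
    proof (rule sum.cong[OF refl])
      fix i
      have "(f i + g i) mod 2 - (f i + g i) = 2 * (- ((f i + g i) div 2))"
        using mult_div_mod_eq[of 2 "f i + g i"] by linarith
      then show "((f i + g i) mod 2 - (f i + g i)) * v i j = 2 * ((- ((f i + g i) div 2)) * v i j)"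
        by (simp add: mult.assoc)
    qed
    also have "\<dots> = 2 * (\<Sum>i\<in>?K. (- ((f i + g i) div 2)) * v i j)"
      by (simp add: sum_distrib_left)
    finally show ?thesis by simp
  qed
  have p1: "\<forall>j. even (u1 j - x j - y j)" unfolding u1_def xa yb using parity by blast
  have p2: "\<forall>j. even (u2 j - x j - z j)" unfolding u2_def xa zc using parity by blast
  have p3: "\<forall>j. even (u3 j - y j - z j)" unfolding u3_def yb zc using parity by blast
  have "2 * (dot r u1 u1 + dot r u2 u2 + dot r u3 u3)
     = Fp ?K v r (\<lambda>i. a i + b i) + Fp ?K v r (\<lambda>i. a i + c i) + Fp ?K v r (\<lambda>i. b i + c i)"
    unfolding u1_def u2_def u3_def using Fp_eq[OF fin sum0] by (simp add: distrib_left)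
  also have "\<dots> \<le> Fp ?K v r a + Fp ?K v r b + Fp ?K v r c + Fp ?K v r e"
    unfolding e_def by (rule Fp_quad[OF fin obt])
  also have "\<dots> \<le> 2 * (dot r x x + dot r y y + dot r z z + dot r w w)"
    using Fp_le[OF fin sum0 obt, of a] Fp_le[OF fin sum0 obt, of b] Fp_le[OF fin sum0 obt, of c]
      Fp_le[OF fin sum0 obt, of e] unfolding xa yb zc we by simp
  finally have "dot r u1 u1 + dot r u2 u2 + dot r u3 u3 \<le> dot r x x + dot r y y + dot r z z + dot r w w"
    by simp
  with inL p1 p2 p3 show ?thesis by blast
qed



definition balanced :: "(nat \<Rightarrow> int) \<Rightarrow> nat set \<Rightarrow> bool" where
  "balanced \<sigma> P \<longleftrightarrow> (\<exists>\<epsilon>. (\<forall>j\<in>P. \<epsilon> j = 1 \<or> \<epsilon> j = -1) \<and> (\<Sum>j\<in>P. \<epsilon> j * \<sigma> j) = 0)"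

lemma card_as_sum:
  assumes "P \<subseteq> {1..(r::nat)}"
  shows "(\<Sum>j=1..r. (if j \<in> P then 1 else 0::int)) = int (card P)"
proof -
  have "(\<Sum>j=1..r. (if j \<in> P then 1 else 0::int)) = (\<Sum>j=1..r. of_bool (j \<in> P))"
    by (rule sum.cong) auto
  also have "\<dots> = int (card ({1..r} \<inter> {j. j \<in> P}))" by (rule sum_of_bool_eq) simp_all
  also have "{1..r} \<inter> {j. j \<in> P} = P" using assms by auto
  finally show ?thesis by simp
qed

lemma lb:
  assumes uL: "u \<in> cm_lattice r \<sigma>" and PI: "P \<subseteq> {1..r}"
    and oddP: "\<forall>j\<in>{1..r}. odd (u j) \<longleftrightarrow> j \<in> P"
  shows "int (card P) \<le> dot r u u"
    and "\<not> balanced \<sigma> P \<Longrightarrow> int (card P) + 3 \<le> dot r u u"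
proof -
  have pt: "(if j \<in> P then 1 else 0) \<le> (u j)^2" if "j \<in> {1..r}" for j
    using sq_ge_odd[of "u j"] oddP that by auto
  have "int (card P) = (\<Sum>j=1..r. (if j \<in> P then 1 else 0::int))"
    using card_as_sum[OF PI] by simp
  also have "\<dots> \<le> (\<Sum>j=1..r. (u j)^2)" by (rule sum_mono) (rule pt)
  also have "\<dots> = dot r u u" unfolding dot_def by (simp add: power2_eq_square)
  finally show "int (card P) \<le> dot r u u" .
  assume nb: "\<not> balanced \<sigma> P"
  show "int (card P) + 3 \<le> dot r u u"
  proof (cases "\<exists>j0\<in>{1..r}. \<bar>u j0\<bar> \<ge> 2")
    case True
    then obtain j0 where j0: "j0 \<in> {1..r}" "\<bar>u j0\<bar> \<ge> 2" by blast
    have sq4: "(u j0)^2 \<ge> 4"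
    proof -
      have "\<bar>u j0\<bar> * \<bar>u j0\<bar> \<ge> 2 * 2" using j0(2) by (intro mult_mono) auto
      then show ?thesis by (simp add: power2_eq_square)
    qed
    have pt2: "(if j \<in> P then 1 else 0) + (if j = j0 then 3 else 0) \<le> (u j)^2" if "j \<in> {1..r}" for j
      using pt[OF that] sq4 by auto
    have "int (card P) + 3 = (\<Sum>j=1..r. (if j \<in> P then 1 else 0::int)) + (\<Sum>j=1..r. (if j = j0 then 3 else 0::int))"
      using card_as_sum[OF PI] j0(1) by simp
    also have "\<dots> = (\<Sum>j=1..r. (if j \<in> P then 1 else 0) + (if j = j0 then 3 else 0::int))"
      by (simp add: sum.distrib)
    also have "\<dots> \<le> (\<Sum>j=1..r. (u j)^2)" by (rule sum_mono) (rule pt2)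
    also have "\<dots> = dot r u u" unfolding dot_def by (simp add: power2_eq_square)
    finally show ?thesis .
  next
    case False
    then have small: "\<bar>u j\<bar> \<le> 1" if "j \<in> {1..r}" for j using that by force
    have u0: "u j = 0" if "j \<in> {1..r}" "j \<notin> P" for j
    proof -
      have ev: "even (u j)" using oddP that by auto
      have "u j = -1 \<or> u j = 0 \<or> u j = 1" using small[OF that(1)] by linarith
      with ev show ?thesis by auto
    qed
    have u1: "u j = 1 \<or> u j = -1" if "j \<in> P" for j
    proof -
      have "j \<in> {1..r}" using that PI by auto
      then have "odd (u j)" "\<bar>u j\<bar> \<le> 1" using oddP small that by auto
      moreover have "u j = -1 \<or> u j = 0 \<or> u j = 1" using \<open>\<bar>u j\<bar> \<le> 1\<close> by linarith
      ultimately show ?thesis by auto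
    qed
    have "(\<Sum>j\<in>P. u j * \<sigma> j) = (\<Sum>j=1..r. u j * \<sigma> j)"
      by (rule sum.mono_neutral_left) (use PI u0 in auto)
    also have "\<dots> = 0" using uL unfolding cm_lattice_def dot_def by auto
    finally have "balanced \<sigma> P" unfolding balanced_def using u1 by blast
    with nb show ?thesis by blast
  qed
qed

definition sv :: "nat set \<Rightarrow> nat set \<Rightarrow> nat \<Rightarrow> int" where
  "sv P N = (\<lambda>j. (if j \<in> P then 1 else 0) - (if j \<in> N then 1 else 0))"

lemma sv_dot:
  assumes "P \<subseteq> {1..r}" "N \<subseteq> {1..r}"
  shows "dot r (sv P N) f = sum f P - sum f N"
proof -
  have "dot r (sv P N) f = (\<Sum>j=1..r. (if j \<in> P then f j else 0) - (if j \<in> N then f j else 0))"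
    unfolding dot_def sv_def by (rule sum.cong) auto
  also have "\<dots> = (\<Sum>j=1..r. (if j \<in> P then f j else 0)) - (\<Sum>j=1..r. (if j \<in> N then f j else 0))"
    by (rule sum_subtractf)
  also have "\<dots> = sum f P - sum f N"
    using assms by (simp add: sum.inter_restrict[symmetric] Int_absorb1)
  finally show ?thesis .
qed

lemma sv_norm:
  assumes "P \<subseteq> {1..r}" "N \<subseteq> {1..r}" "P \<inter> N = {}"
  shows "dot r (sv P N) (sv P N) = int (card P) + int (card N)"
proof -
  have "dot r (sv P N) (sv P N) = (\<Sum>j=1..r. (if j \<in> P \<union> N then 1 else 0::int))"
    unfolding dot_def sv_def by (rule sum.cong) (use assms in auto)
  also have "\<dots> = int (card (P \<union> N))" using card_as_sum[of "P \<union> N" r] assms by auto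
  also have "\<dots> = int (card P) + int (card N)"
    using assms finite_subset[OF _ finite_atLeastAtMost] by (subst card_Un_disjoint) auto
  finally show ?thesis .
qed

lemma sv_L:
  assumes "P \<subseteq> {1..r}" "N \<subseteq> {1..r}" "sum \<sigma> P = sum \<sigma> N"
  shows "sv P N \<in> cm_lattice r \<sigma>"
proof -
  have "sv P N \<in> zvec r" unfolding zvec_def sv_def using assms(1,2) by auto
  moreover have "dot r (sv P N) \<sigma> = 0" using sv_dot[OF assms(1,2)] assms(3) by simp
  ultimately show ?thesis unfolding cm_lattice_def by simp
qed

lemma cert:
  assumes osb: "obtuse_superbase r (cm_lattice r \<sigma>) k v"
    and xL: "x \<in> cm_lattice r \<sigma>" and yL: "y \<in> cm_lattice r \<sigma>"
    and zL: "z \<in> cm_lattice r \<sigma>" and wL: "w \<in> cm_lattice r \<sigma>"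
    and par: "\<forall>j. even (w j - x j - y j - z j)"
    and P1: "P1 \<subseteq> {1..r}" "\<forall>j\<in>{1..r}. odd (x j + y j) \<longleftrightarrow> j \<in> P1"
    and P2: "P2 \<subseteq> {1..r}" "\<forall>j\<in>{1..r}. odd (x j + z j) \<longleftrightarrow> j \<in> P2"
    and P3: "P3 \<subseteq> {1..r}" "\<forall>j\<in>{1..r}. odd (y j + z j) \<longleftrightarrow> j \<in> P3"
    and h1: "h1 = 0 \<or> (h1 = 3 \<and> \<not> balanced \<sigma> P1)"
    and h2: "h2 = 0 \<or> (h2 = 3 \<and> \<not> balanced \<sigma> P2)"
    and h3: "h3 = 0 \<or> (h3 = 3 \<and> \<not> balanced \<sigma> P3)"
    and ineq: "dot r x x + dot r y y + dot r z z + dot r w w < int (card P1) + int (card P2) + int (card P3) + h1 + h2 + h3"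
  shows False
proof -
  obtain u1 u2 u3 where u: "u1 \<in> cm_lattice r \<sigma>" "u2 \<in> cm_lattice r \<sigma>" "u3 \<in> cm_lattice r \<sigma>"
    "\<forall>j. even (u1 j - x j - y j)" "\<forall>j. even (u2 j - x j - z j)" "\<forall>j. even (u3 j - y j - z j)"
    and le: "dot r u1 u1 + dot r u2 u2 + dot r u3 u3 \<le> dot r x x + dot r y y + dot r z z + dot r w w"
    using core[OF osb xL yL zL wL par] by blast
  have o1: "\<forall>j\<in>{1..r}. odd (u1 j) \<longleftrightarrow> j \<in> P1"
  proof
    fix j assume "j \<in> {1..r}"
    have "even (u1 j - x j - y j)" using u(4) by blast
    then have "odd (u1 j) \<longleftrightarrow> odd (x j + y j)" by (metis diff_diff_eq even_add even_diff)
    then show "odd (u1 j) \<longleftrightarrow> j \<in> P1" using P1(2) \<open>j \<in> {1..r}\<close> by blast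
  qed
  have o2: "\<forall>j\<in>{1..r}. odd (u2 j) \<longleftrightarrow> j \<in> P2"
  proof
    fix j assume "j \<in> {1..r}"
    have "even (u2 j - x j - z j)" using u(5) by blast
    then have "odd (u2 j) \<longleftrightarrow> odd (x j + z j)" by (metis diff_diff_eq even_add even_diff)
    then show "odd (u2 j) \<longleftrightarrow> j \<in> P2" using P2(2) \<open>j \<in> {1..r}\<close> by blast
  qed
  have o3: "\<forall>j\<in>{1..r}. odd (u3 j) \<longleftrightarrow> j \<in> P3"
  proof
    fix j assume "j \<in> {1..r}"
    have "even (u3 j - y j - z j)" using u(6) by blast
    then have "odd (u3 j) \<longleftrightarrow> odd (y j + z j)" by (metis diff_diff_eq even_add even_diff)
    then show "odd (u3 j) \<longleftrightarrow> j \<in> P3" using P3(2) \<open>j \<in> {1..r}\<close> by blast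
  qed
  have b1: "int (card P1) + h1 \<le> dot r u1 u1" using lb[OF u(1) P1(1) o1] h1 by auto
  have b2: "int (card P2) + h2 \<le> dot r u2 u2" using lb[OF u(2) P2(1) o2] h2 by auto
  have b3: "int (card P3) + h3 \<le> dot r u3 u3" using lb[OF u(3) P3(1) o3] h3 by auto
  from b1 b2 b3 le ineq show False by linarith
qed



lemma unbal1:
  assumes "finite Q" "t \<notin> Q" "\<forall>j\<in>Q. \<sigma> j \<ge> 0" "sum \<sigma> Q < \<sigma> t"
  shows "\<not> balanced \<sigma> (insert t Q)"
proof
  assume "balanced \<sigma> (insert t Q)"
  then obtain \<epsilon> where e: "\<forall>j\<in>insert t Q. \<epsilon> j = 1 \<or> \<epsilon> j = -1" and s: "(\<Sum>j\<in>insert t Q. \<epsilon> j * \<sigma> j) = 0"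
    unfolding balanced_def by blast
  have s2: "\<epsilon> t * \<sigma> t + (\<Sum>j\<in>Q. \<epsilon> j * \<sigma> j) = 0" using s assms(1,2) by simp
  have "\<bar>\<Sum>j\<in>Q. \<epsilon> j * \<sigma> j\<bar> \<le> (\<Sum>j\<in>Q. \<bar>\<epsilon> j * \<sigma> j\<bar>)" by (rule sum_abs)
  also have "\<dots> = sum \<sigma> Q"
  proof (rule sum.cong[OF refl])
    fix j assume "j \<in> Q"
    then show "\<bar>\<epsilon> j * \<sigma> j\<bar> = \<sigma> j" using e assms(3) by (auto simp: abs_mult)
  qed
  finally have a: "\<bar>\<Sum>j\<in>Q. \<epsilon> j * \<sigma> j\<bar> \<le> sum \<sigma> Q" .
  have "sum \<sigma> Q \<ge> 0" using assms(3) by (simp add: sum_nonneg)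
  then have "\<sigma> t > 0" using assms(4) by linarith
  have "\<bar>\<epsilon> t * \<sigma> t\<bar> = \<sigma> t" using e \<open>\<sigma> t > 0\<close> by (auto simp: abs_mult)
  with s2 a assms(4) show False by linarith
qed

lemma unbal3:
  assumes "p \<noteq> q" "p \<noteq> s" "q \<noteq> s" "\<sigma> p = 2" "\<sigma> q = 2" "\<sigma> s = 2"
  shows "\<not> balanced \<sigma> {p, q, s}"
proof
  assume "balanced \<sigma> {p, q, s}"
  then obtain \<epsilon> where e: "\<forall>j\<in>{p,q,s}. \<epsilon> j = 1 \<or> \<epsilon> j = -1" and sm: "(\<Sum>j\<in>{p,q,s}. \<epsilon> j * \<sigma> j) = 0"
    unfolding balanced_def by blast
  have "\<epsilon> p * 2 + \<epsilon> q * 2 + \<epsilon> s * 2 = 0" using sm assms by simp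
  with e show False by auto
qed

lemma T1:
  assumes osb: "obtuse_superbase r (cm_lattice r \<sigma>) k v"
    and dst: "distinct [al, be, ga, de, t]"
    and S: "{al, be, ga, de, t} \<subseteq> {1..r}" and QI: "Q \<subseteq> {1..r}"
    and SQ: "{al, be, ga, de, t} \<inter> Q = {}"
    and vals: "\<sigma> al = c" "\<sigma> be = c" "\<sigma> ga = c" "\<sigma> de = c" "c \<ge> 1"
    and pos: "\<forall>j\<in>Q. \<sigma> j \<ge> 0"
    and rel: "\<sigma> t = 2 * c + sum \<sigma> Q"
  shows False
proof -
  have I: "al \<in> {1..r}" "be \<in> {1..r}" "ga \<in> {1..r}" "de \<in> {1..r}" "t \<in> {1..r}" "Q \<subseteq> {1..r}"
    using S QI by auto
  have dist: "al \<noteq> be" "al \<noteq> ga" "al \<noteq> de" "al \<noteq> t" "be \<noteq> ga" "be \<noteq> de" "be \<noteq> t"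
      "ga \<noteq> de" "ga \<noteq> t" "de \<noteq> t" using dst by auto
  have nQ: "al \<notin> Q" "be \<notin> Q" "ga \<notin> Q" "de \<notin> Q" "t \<notin> Q" using SQ by auto
  have fQ: "finite Q" using I(6) finite_subset by blast
  define x where "x = sv {al} {be}"
  define y where "y = sv (insert al (insert be Q)) {t}"
  define z where "z = sv {ga} {de}"
  define w where "w = sv (insert ga (insert de Q)) {t}"
  have xL: "x \<in> cm_lattice r \<sigma>" unfolding x_def by (rule sv_L) (use I vals in auto)
  have zL: "z \<in> cm_lattice r \<sigma>" unfolding z_def by (rule sv_L) (use I vals in auto)
  have yL: "y \<in> cm_lattice r \<sigma>" unfolding y_def by (rule sv_L) (use I vals nQ dist fQ rel in auto)
  have wL: "w \<in> cm_lattice r \<sigma>" unfolding w_def by (rule sv_L) (use I vals nQ dist fQ rel in auto)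
  have nx: "dot r x x = 2" unfolding x_def by (subst sv_norm) (use I dist in auto)
  have nz: "dot r z z = 2" unfolding z_def by (subst sv_norm) (use I dist in auto)
  have ny: "dot r y y = int (card Q) + 3" unfolding y_def by (subst sv_norm) (use I dist nQ fQ in auto)
  have nw: "dot r w w = int (card Q) + 3" unfolding w_def by (subst sv_norm) (use I dist nQ fQ in auto)
  have par: "\<forall>j. even (w j - x j - y j - z j)"
    unfolding x_def y_def z_def w_def sv_def using dist nQ by auto
  let ?P1 = "insert t Q"
  let ?P2 = "{al, be, ga, de}"
  let ?P3 = "insert al (insert be (insert ga (insert de (insert t Q))))"
  have p1: "\<forall>j\<in>{1..r}. odd (x j + y j) \<longleftrightarrow> j \<in> ?P1"
    unfolding x_def y_def sv_def using dist nQ by auto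
  have p2: "\<forall>j\<in>{1..r}. odd (x j + z j) \<longleftrightarrow> j \<in> ?P2"
    unfolding x_def z_def sv_def using dist nQ by auto
  have p3: "\<forall>j\<in>{1..r}. odd (y j + z j) \<longleftrightarrow> j \<in> ?P3"
    unfolding y_def z_def sv_def using dist nQ by auto
  have nb: "\<not> balanced \<sigma> ?P1" by (rule unbal1) (use fQ nQ pos rel vals in auto)
  have c1: "card ?P1 = card Q + 1" using fQ nQ by simp
  have c2: "card ?P2 = 4" using dist by simp
  have c3: "card ?P3 = card Q + 5" using fQ nQ dist by simp
  show False
    by (rule cert[OF osb xL yL zL wL par, of ?P1 ?P2 ?P3 3 0 0])
       (use I p1 p2 p3 nb c1 c2 c3 nx ny nz nw in auto)
qed



lemma T2a:
  assumes osb: "obtuse_superbase r (cm_lattice r \<sigma>) k v"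
    and dist: "distinct [al, be, ga, de, io, t]"
    and S: "{al, be, ga, de, io, t} \<subseteq> {1..r}"
    and vals: "\<sigma> al = 2" "\<sigma> be = 2" "\<sigma> ga = 2" "\<sigma> de = 2" "\<sigma> io = 1" "\<sigma> t = 3"
  shows False
proof -
  have I: "al \<in> {1..r}" "be \<in> {1..r}" "ga \<in> {1..r}" "de \<in> {1..r}" "io \<in> {1..r}" "t \<in> {1..r}"
    using S by auto
  define x where "x = sv {al} {be}"
  define y where "y = sv {al, be} {io, t}"
  define z where "z = sv {ga} {de}"
  define w where "w = sv {ga, de} {io, t}"
  have xL: "x \<in> cm_lattice r \<sigma>" unfolding x_def by (rule sv_L) (use I vals in auto)
  have zL: "z \<in> cm_lattice r \<sigma>" unfolding z_def by (rule sv_L) (use I vals in auto)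
  have yL: "y \<in> cm_lattice r \<sigma>" unfolding y_def by (rule sv_L) (use I vals dist in auto)
  have wL: "w \<in> cm_lattice r \<sigma>" unfolding w_def by (rule sv_L) (use I vals dist in auto)
  have nx: "dot r x x = 2" unfolding x_def by (subst sv_norm) (use I dist in auto)
  have nz: "dot r z z = 2" unfolding z_def by (subst sv_norm) (use I dist in auto)
  have ny: "dot r y y = 4" unfolding y_def by (subst sv_norm) (use I dist in auto)
  have nw: "dot r w w = 4" unfolding w_def by (subst sv_norm) (use I dist in auto)
  have par: "\<forall>j. even (w j - x j - y j - z j)"
    unfolding x_def y_def z_def w_def sv_def using dist by auto
  let ?P1 = "insert t {io}"
  let ?P2 = "{al, be, ga, de}"
  let ?P3 = "{al, be, ga, de, io, t}"
  have p1: "\<forall>j\<in>{1..r}. odd (x j + y j) \<longleftrightarrow> j \<in> ?P1"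
    unfolding x_def y_def sv_def using dist by auto
  have p2: "\<forall>j\<in>{1..r}. odd (x j + z j) \<longleftrightarrow> j \<in> ?P2"
    unfolding x_def z_def sv_def using dist by auto
  have p3: "\<forall>j\<in>{1..r}. odd (y j + z j) \<longleftrightarrow> j \<in> ?P3"
    unfolding y_def z_def sv_def using dist by auto
  have nb: "\<not> balanced \<sigma> ?P1" by (rule unbal1) (use dist vals in auto)
  have c1: "card ?P1 = 2" using dist by auto
  have c2: "card ?P2 = 4" using dist by auto
  have c3: "card ?P3 = 6" using dist by auto
  show False
    by (rule cert[OF osb xL yL zL wL par, of ?P1 ?P2 ?P3 3 0 0])
       (use I p1 p2 p3 nb c1 c2 c3 nx ny nz nw in auto)
qed

lemma T2b:
  assumes osb: "obtuse_superbase r (cm_lattice r \<sigma>) k v"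
    and dist: "distinct [al, be, ga, de, io, t]"
    and S: "{al, be, ga, de, io, t} \<subseteq> {1..r}"
    and vals: "\<sigma> al = 2" "\<sigma> be = 2" "\<sigma> ga = 1" "\<sigma> de = 1" "\<sigma> io = 1" "\<sigma> t = 3"
  shows False
proof -
  have I: "al \<in> {1..r}" "be \<in> {1..r}" "ga \<in> {1..r}" "de \<in> {1..r}" "io \<in> {1..r}" "t \<in> {1..r}"
    using S by auto
  define x where "x = sv {al} {be}"
  define y where "y = sv {al, be} {io, t}"
  define z where "z = sv {ga} {de}"
  define w where "w = sv {ga, de, io} {t}"
  have xL: "x \<in> cm_lattice r \<sigma>" unfolding x_def by (rule sv_L) (use I vals in auto)
  have zL: "z \<in> cm_lattice r \<sigma>" unfolding z_def by (rule sv_L) (use I vals in auto)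
  have yL: "y \<in> cm_lattice r \<sigma>" unfolding y_def by (rule sv_L) (use I vals dist in auto)
  have wL: "w \<in> cm_lattice r \<sigma>" unfolding w_def by (rule sv_L) (use I vals dist in auto)
  have nx: "dot r x x = 2" unfolding x_def by (subst sv_norm) (use I dist in auto)
  have nz: "dot r z z = 2" unfolding z_def by (subst sv_norm) (use I dist in auto)
  have ny: "dot r y y = 4" unfolding y_def by (subst sv_norm) (use I dist in auto)
  have nw: "dot r w w = 4" unfolding w_def by (subst sv_norm) (use I dist in auto)
  have par: "\<forall>j. even (w j - x j - y j - z j)"
    unfolding x_def y_def z_def w_def sv_def using dist by auto
  let ?P1 = "insert t {io}"
  let ?P2 = "{al, be, ga, de}"
  let ?P3 = "{al, be, ga, de, io, t}"
  have p1: "\<forall>j\<in>{1..r}. odd (x j + y j) \<longleftrightarrow> j \<in> ?P1"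
    unfolding x_def y_def sv_def using dist by auto
  have p2: "\<forall>j\<in>{1..r}. odd (x j + z j) \<longleftrightarrow> j \<in> ?P2"
    unfolding x_def z_def sv_def using dist by auto
  have p3: "\<forall>j\<in>{1..r}. odd (y j + z j) \<longleftrightarrow> j \<in> ?P3"
    unfolding y_def z_def sv_def using dist by auto
  have nb: "\<not> balanced \<sigma> ?P1" by (rule unbal1) (use dist vals in auto)
  have c1: "card ?P1 = 2" using dist by auto
  have c2: "card ?P2 = 4" using dist by auto
  have c3: "card ?P3 = 6" using dist by auto
  show False
    by (rule cert[OF osb xL yL zL wL par, of ?P1 ?P2 ?P3 3 0 0])
       (use I p1 p2 p3 nb c1 c2 c3 nx ny nz nw in auto)
qed

lemma T3:
  assumes osb: "obtuse_superbase r (cm_lattice r \<sigma>) k v"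
    and dist: "distinct [o1, o2, p, q, p', t]"
    and S: "{o1, o2, p, q, p', t} \<subseteq> {1..r}"
    and vals: "\<sigma> o1 = 1" "\<sigma> o2 = 1" "\<sigma> p = 2" "\<sigma> q = 2" "\<sigma> p' = 2" "\<sigma> t = 3"
  shows False
proof -
  have I: "o1 \<in> {1..r}" "o2 \<in> {1..r}" "p \<in> {1..r}" "q \<in> {1..r}" "p' \<in> {1..r}" "t \<in> {1..r}"
    using S by auto
  define x where "x = sv {p'} {o1, o2}"
  define y where "y = sv {t} {o1, p'}"
  define z where "z = sv {p, q} {o1, t}"
  define w where "w = sv {o1, p} {o2, q}"
  have xL: "x \<in> cm_lattice r \<sigma>" unfolding x_def by (rule sv_L) (use I vals dist in auto)
  have zL: "z \<in> cm_lattice r \<sigma>" unfolding z_def by (rule sv_L) (use I vals dist in auto)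
  have yL: "y \<in> cm_lattice r \<sigma>" unfolding y_def by (rule sv_L) (use I vals dist in auto)
  have wL: "w \<in> cm_lattice r \<sigma>" unfolding w_def by (rule sv_L) (use I vals dist in auto)
  have nx: "dot r x x = 3" unfolding x_def by (subst sv_norm) (use I dist in auto)
  have nz: "dot r z z = 4" unfolding z_def by (subst sv_norm) (use I dist in auto)
  have ny: "dot r y y = 3" unfolding y_def by (subst sv_norm) (use I dist in auto)
  have nw: "dot r w w = 4" unfolding w_def by (subst sv_norm) (use I dist in auto)
  have par: "\<forall>j. even (w j - x j - y j - z j)"
    unfolding x_def y_def z_def w_def sv_def using dist by auto
  let ?P1 = "insert t {o2}"
  let ?P2 = "{p', o2, p, q, t}"
  let ?P3 = "{p', p, q}"
  have p1: "\<forall>j\<in>{1..r}. odd (x j + y j) \<longleftrightarrow> j \<in> ?P1"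
    unfolding x_def y_def sv_def using dist by auto
  have p2: "\<forall>j\<in>{1..r}. odd (x j + z j) \<longleftrightarrow> j \<in> ?P2"
    unfolding x_def z_def sv_def using dist by auto
  have p3: "\<forall>j\<in>{1..r}. odd (y j + z j) \<longleftrightarrow> j \<in> ?P3"
    unfolding y_def z_def sv_def using dist by auto
  have nb1: "\<not> balanced \<sigma> ?P1" by (rule unbal1) (use dist vals in auto)
  have nb3: "\<not> balanced \<sigma> ?P3" by (rule unbal3) (use dist vals in auto)
  have c1: "card ?P1 = 2" using dist by auto
  have c2: "card ?P2 = 5" using dist by auto
  have c3: "card ?P3 = 3" using dist by auto
  show False
    by (rule cert[OF osb xL yL zL wL par, of ?P1 ?P2 ?P3 3 0 3])
       (use I p1 p2 p3 nb1 nb3 c1 c2 c3 nx ny nz nw in auto)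
qed



lemma pick:
  assumes "finite A" "Suc n \<le> card A"
  obtains x where "x \<in> A" "n \<le> card (A - {x})"
proof -
  have "A \<noteq> {}" using assms by auto
  then obtain x where "x \<in> A" by blast
  moreover have "card (A - {x}) = card A - 1" using \<open>x \<in> A\<close> assms(1) by simp
  ultimately show ?thesis using that assms(2) by simp
qed

lemma cm_pos:
  assumes "changemaker r \<sigma>"
  shows "\<forall>j\<in>{1..r}. \<sigma> j \<ge> 1"
proof -
  have s1: "\<sigma> 1 = 1" and mono: "\<forall>i\<in>{2..r}. \<sigma> (i - 1) \<le> \<sigma> i"
    using assms unfolding changemaker_def by auto
  have "1 \<le> j \<longrightarrow> j \<le> r \<longrightarrow> \<sigma> j \<ge> 1" for j
  proof (induction j)
    case 0 then show ?case by simp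
  next
    case (Suc j)
    show ?case
    proof (cases "j = 0")
      case True then show ?thesis using s1 by simp
    next
      case False
      then show ?thesis using Suc mono[rule_format, of "Suc j"] by auto
    qed
  qed
  then show ?thesis by auto
qed



lemma pick2:
  assumes "finite A" "2 + m \<le> card A"
  obtains x1 x2 where "x1 \<in> A" "x2 \<in> A" "x1 \<noteq> x2" "m \<le> card (A - {x1, x2})"
proof -
  obtain x1 where 1: "x1 \<in> A" "Suc m \<le> card (A - {x1})" using pick[OF assms(1), of "Suc m"] assms(2) by auto
  obtain x2 where 2: "x2 \<in> A - {x1}" "m \<le> card (A - {x1} - {x2})" using pick[OF _ 1(2)] assms(1) by auto
  have "A - {x1} - {x2} = A - {x1, x2}" by auto
  then show ?thesis using that 1 2 by auto
qed

lemma pick3: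
  assumes "finite A" "3 + m \<le> card A"
  obtains x1 x2 x3 where "x1 \<in> A" "x2 \<in> A" "x3 \<in> A" "distinct [x1, x2, x3]" "m \<le> card (A - {x1, x2, x3})"
proof -
  obtain x1 where 1: "x1 \<in> A" "2 + m \<le> card (A - {x1})" using pick[OF assms(1), of "2 + m"] assms(2) by auto
  obtain x2 x3 where 2: "x2 \<in> A - {x1}" "x3 \<in> A - {x1}" "x2 \<noteq> x3" "m \<le> card (A - {x1} - {x2, x3})"
    using pick2[OF _ 1(2)] assms(1) by auto
  have "A - {x1} - {x2, x3} = A - {x1, x2, x3}" by auto
  then show ?thesis using that 1 2 by auto
qed

lemma pick4:
  assumes "finite A" "4 + m \<le> card A"
  obtains x1 x2 x3 x4 where "x1 \<in> A" "x2 \<in> A" "x3 \<in> A" "x4 \<in> A" "distinct [x1, x2, x3, x4]"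
    "m \<le> card (A - {x1, x2, x3, x4})"
proof -
  obtain x1 where 1: "x1 \<in> A" "3 + m \<le> card (A - {x1})" using pick[OF assms(1), of "3 + m"] assms(2) by auto
  obtain x2 x3 x4 where 2: "x2 \<in> A - {x1}" "x3 \<in> A - {x1}" "x4 \<in> A - {x1}" "distinct [x2, x3, x4]"
    "m \<le> card (A - {x1} - {x2, x3, x4})"
    using pick3[OF _ 1(2)] assms(1) by auto
  have "A - {x1} - {x2, x3, x4} = A - {x1, x2, x3, x4}" by auto
  then show ?thesis using that 1 2 by auto
qed

theorem theorem6p1:
  fixes r :: nat and \<sigma> :: "nat \<Rightarrow> int"
  assumes "changemaker r \<sigma>"
    and "\<sigma> r \<ge> 3"
    and "admits_obtuse_superbase r (cm_lattice r \<sigma>)"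
  shows "real_of_int (dot r \<sigma> \<sigma>) \<le> 4 + 3/2 * (\<Sum>i=1..r. real_of_int (\<sigma> i * (\<sigma> i - 1)))"
proof (rule ccontr)
  assume neg: "\<not> ?thesis"
  note cm = assms(1)
  obtain k v where osb: "obtuse_superbase r (cm_lattice r \<sigma>) k v"
    using assms(3) unfolding admits_obtuse_superbase_def by blast
  have r1: "1 \<le> r" and s1: "\<sigma> 1 = 1" using cm unfolding changemaker_def by auto
  have pos: "\<forall>j\<in>{1..r}. \<sigma> j \<ge> 1" by (rule cm_pos[OF cm])
  define f where "f = (\<lambda>j. \<sigma> j * (3 - \<sigma> j))"
  have hsum: "(\<Sum>j=1..r. f j) > 8"
  proof -
    let ?T = "(\<Sum>i=1..r. \<sigma> i * (\<sigma> i - 1))"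
    have e1: "(\<Sum>i=1..r. real_of_int (\<sigma> i * (\<sigma> i - 1))) = real_of_int ?T" by simp
    have "real_of_int (dot r \<sigma> \<sigma>) > 4 + 3/2 * real_of_int ?T" using neg e1 by simp
    then have "real_of_int (8 + 3 * ?T) < real_of_int (2 * dot r \<sigma> \<sigma>)" by simp
    then have i1: "8 + 3 * ?T < 2 * dot r \<sigma> \<sigma>" by (simp only: of_int_less_iff)
    have i2: "dot r \<sigma> \<sigma> = (\<Sum>i=1..r. \<sigma> i * \<sigma> i)" by (simp add: dot_def)
    have i3: "?T = (\<Sum>i=1..r. \<sigma> i * \<sigma> i) - (\<Sum>i=1..r. \<sigma> i)"
      by (simp add: algebra_simps sum_subtractf)
    have i4: "(\<Sum>j=1..r. f j) = 3 * (\<Sum>i=1..r. \<sigma> i) - (\<Sum>i=1..r. \<sigma> i * \<sigma> i)"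
      by (simp add: f_def algebra_simps sum_subtractf sum_distrib_left)
    show ?thesis using i1 i2 i3 i4 by linarith
  qed
  define A1 where "A1 = {j\<in>{1..r}. \<sigma> j = 1}"
  define A2 where "A2 = {j\<in>{1..r}. \<sigma> j = 2}"
  define Bg where "Bg = {j\<in>{1..r}. \<sigma> j \<ge> 3}"
  have fin: "finite A1" "finite A2" "finite Bg" unfolding A1_def A2_def Bg_def by auto
  have part: "{1..r} = A1 \<union> A2 \<union> Bg" unfolding A1_def A2_def Bg_def using pos by force
  have disj: "A1 \<inter> A2 = {}" "(A1 \<union> A2) \<inter> Bg = {}" unfolding A1_def A2_def Bg_def by auto
  have rB: "r \<in> Bg" unfolding Bg_def using r1 assms(2) by auto
  define a where "a = card A1"
  define b where "b = card A2"
  define B where "B = \<sigma> r"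
  have B3: "B \<ge> 3" unfolding B_def using assms(2) .
  have sA1: "sum f A1 = 2 * int a" unfolding a_def f_def A1_def by simp
  have sA2: "sum f A2 = 2 * int b" unfolding b_def f_def A2_def by simp
  have sBg: "sum f Bg \<le> B * (3 - B)"
  proof -
    have "sum f Bg = f r + sum f (Bg - {r})" using rB fin(3) by (simp add: sum.remove)
    moreover have "sum f (Bg - {r}) \<le> 0"
    proof (rule sum_nonpos)
      fix j assume "j \<in> Bg - {r}"
      then have "\<sigma> j \<ge> 3" unfolding Bg_def by auto
      then show "f j \<le> 0" unfolding f_def by (simp add: mult_nonneg_nonpos)
    qed
    ultimately show ?thesis unfolding f_def B_def by simp
  qed
  have "(\<Sum>j=1..r. f j) = sum f A1 + sum f A2 + sum f Bg"
    unfolding part using fin disj by (simp add: sum.union_disjoint)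
  then have main: "2 * int a + 2 * int b + B * (3 - B) > 8" using hsum sA1 sA2 sBg by linarith
  have BB: "B * (3 - B) \<le> 0" using B3 by (simp add: mult_nonneg_nonpos)
  have a1: "a \<ge> 1"
  proof -
    have "1 \<in> A1" unfolding A1_def using r1 s1 by auto
    then show ?thesis unfolding a_def using fin(1) card_0_eq by (metis One_nat_def Suc_leI empty_iff neq0_conv)
  qed
  have rA1: "r \<notin> A1" and rA2: "r \<notin> A2" using rB disj by auto
  have A1I: "A1 \<subseteq> {1..r}" and A2I: "A2 \<subseteq> {1..r}" unfolding A1_def A2_def by auto
  have A1v: "\<And>j. j \<in> A1 \<Longrightarrow> \<sigma> j = 1" and A2v: "\<And>j. j \<in> A2 \<Longrightarrow> \<sigma> j = 2"
    unfolding A1_def A2_def by auto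
  have rI: "r \<in> {1..r}" using r1 by auto
  show False
  proof (cases "a \<ge> 4")
    case a4: True
    show False
    proof (cases "b \<ge> 1")
      case True
      have "4 + 0 \<le> card A1" using a4 unfolding a_def by simp

      then obtain x1 x2 x3 x4 where xs: "x1 \<in> A1" "x2 \<in> A1" "x3 \<in> A1" "x4 \<in> A1" "distinct [x1, x2, x3, x4]" and "0 \<le> card (A1 - {x1, x2, x3, x4})"

        by (rule pick4[OF fin(1)])
      have "A2 \<noteq> {}" using True unfolding b_def by auto
      then obtain t where t: "t \<in> A2" by blast
      have "t \<notin> A1" using t disj by auto
      have d: "distinct [x1, x2, x3, x4, t]" using xs \<open>t \<notin> A1\<close> by auto
      have S: "{x1, x2, x3, x4, t} \<subseteq> {1..r}" using xs t A1I A2I by auto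
      show False
        by (rule T1[OF osb d S, where Q = "{}" and c = 1]) (simp_all add: xs t A1v A2v)
    next
      case False
      then have b0: "b = 0" by simp
      have "B * (3 - B) = 6 - 2 * B - (B - 2) * (B - 3)" by (simp add: algebra_simps)
      moreover have "(B - 2) * (B - 3) \<ge> 0" using B3 by simp
      ultimately have "int a \<ge> B + 2" using main b0 by linarith
      then have am: "4 + nat (B - 2) \<le> card A1" unfolding a_def using B3 by linarith
      obtain x1 x2 x3 x4 where xs: "x1 \<in> A1" "x2 \<in> A1" "x3 \<in> A1" "x4 \<in> A1" "distinct [x1, x2, x3, x4]"
        and cm4: "nat (B - 2) \<le> card (A1 - {x1, x2, x3, x4})"
        by (rule pick4[OF fin(1) am])
      obtain Q where Q: "Q \<subseteq> A1 - {x1, x2, x3, x4}" "card Q = nat (B - 2)" "finite Q"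
        by (rule obtain_subset_with_card_n[OF cm4])
      have sQ: "sum \<sigma> Q = B - 2"
      proof -
        have "sum \<sigma> Q = (\<Sum>j\<in>Q. 1)" using Q(1) A1v by (intro sum.cong) auto
        then show ?thesis using Q(2) B3 by simp
      qed
      have d: "distinct [x1, x2, x3, x4, r]" using xs rA1 by auto
      have S: "{x1, x2, x3, x4, r} \<subseteq> {1..r}" using xs rI A1I by auto
      have QI: "Q \<subseteq> {1..r}" using Q(1) A1I by auto
      have SQ: "{x1, x2, x3, x4, r} \<inter> Q = {}" using Q(1) rA1 by auto
      have posQ: "\<forall>j\<in>Q. \<sigma> j \<ge> 0" using Q(1) A1v by auto
      have rel: "\<sigma> r = 2 * 1 + sum \<sigma> Q" using sQ B_def by simp
      show False
        by (rule T1[OF osb d S QI SQ _ _ _ _ _ posQ rel]) (simp_all add: xs A1v)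
    qed
  next
    case a3: False
    then have a3': "a \<le> 3" by simp
    have ab5: "a + b \<ge> 5" using main BB by linarith
    show False
    proof (cases "B \<ge> 4")
      case B4: True
      have "B * (3 - B) \<le> - B"
      proof -
        have "B * (B - 4) \<ge> 0" using B4 by simp
        then show ?thesis by (simp add: algebra_simps)
      qed
      then have ineq: "2 * int a + 2 * int b > 8 + B" using main by linarith
      then have b4: "b \<ge> 4" using a3' B4 by linarith
      define k2 where "k2 = min (b - 4) (nat ((B - 4) div 2))"
      define m where "m = nat (B - 4 - 2 * int k2)"
      have k2le: "int k2 \<le> (B - 4) div 2" unfolding k2_def using B4 by auto
      have m_eq: "int m = B - 4 - 2 * int k2"
      proof -
        have "2 * ((B - 4) div 2) \<le> B - 4" by simp
        then show ?thesis unfolding m_def using k2le by linarith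
      qed
      have m_le: "m \<le> a"
      proof (cases "nat ((B - 4) div 2) \<le> b - 4")
        case True
        then have "int k2 = (B - 4) div 2" unfolding k2_def using B4 by auto
        then have "int m = (B - 4) mod 2" using m_eq by (simp add: minus_div_mult_eq_mod[symmetric] algebra_simps)
        then have "int m \<le> 1" by simp
        then show ?thesis using a1 by linarith
      next
        case False
        then have "k2 = b - 4" unfolding k2_def by auto
        then show ?thesis using m_eq ineq b4 a3' by linarith
      qed
      have bm: "4 + k2 \<le> card A2" unfolding k2_def b_def[symmetric] using b4 by auto
      obtain x1 x2 x3 x4 where xs: "x1 \<in> A2" "x2 \<in> A2" "x3 \<in> A2" "x4 \<in> A2" "distinct [x1, x2, x3, x4]"
        and ck: "k2 \<le> card (A2 - {x1, x2, x3, x4})"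
        by (rule pick4[OF fin(2) bm])
      obtain Q2 where Q2: "Q2 \<subseteq> A2 - {x1, x2, x3, x4}" "card Q2 = k2" "finite Q2"
        by (rule obtain_subset_with_card_n[OF ck])
      have "m \<le> card A1" using m_le unfolding a_def .
      then obtain Q1 where Q1: "Q1 \<subseteq> A1" "card Q1 = m" "finite Q1"
        by (rule obtain_subset_with_card_n)
      have dQ: "Q1 \<inter> Q2 = {}" using Q1(1) Q2(1) disj by auto
      have s1': "sum \<sigma> Q1 = int m"
      proof -
        have "sum \<sigma> Q1 = (\<Sum>j\<in>Q1. 1)" using Q1(1) A1v by (intro sum.cong) auto
        then show ?thesis using Q1(2) by simp
      qed
      have s2': "sum \<sigma> Q2 = 2 * int k2"
      proof -
        have "sum \<sigma> Q2 = (\<Sum>j\<in>Q2. 2)" using Q2(1) A2v by (intro sum.cong) auto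
        then show ?thesis using Q2(2) by simp
      qed
      have sQ: "sum \<sigma> (Q1 \<union> Q2) = B - 4"
        using s1' s2' m_eq Q1(3) Q2(3) dQ by (simp add: sum.union_disjoint)
      have nQ: "x1 \<notin> Q1 \<union> Q2" "x2 \<notin> Q1 \<union> Q2" "x3 \<notin> Q1 \<union> Q2" "x4 \<notin> Q1 \<union> Q2" "r \<notin> Q1 \<union> Q2"
        using Q1(1) Q2(1) xs disj rA1 rA2 by auto
      have posQ: "\<forall>j\<in>Q1 \<union> Q2. \<sigma> j \<ge> 0" using Q1(1) Q2(1) A1v A2v by force
      have QI: "Q1 \<union> Q2 \<subseteq> {1..r}" using Q1(1) Q2(1) A1I A2I by blast
      have d: "distinct [x1, x2, x3, x4, r]" using xs rA2 by auto
      have S: "{x1, x2, x3, x4, r} \<subseteq> {1..r}" using xs rI A2I by auto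
      have SQ: "{x1, x2, x3, x4, r} \<inter> (Q1 \<union> Q2) = {}" using nQ by auto
      have rel: "\<sigma> r = 2 * 2 + sum \<sigma> (Q1 \<union> Q2)" using sQ B_def by simp
      show False
        by (rule T1[OF osb d S QI SQ _ _ _ _ _ posQ rel]) (simp_all add: xs A2v)
    next
      case False
      then have B3e: "B = 3" using B3 by simp
      have t3: "\<sigma> r = 3" using B3e B_def by simp
      have "A1 \<noteq> {}" using a1 unfolding a_def by auto
      then obtain io where io: "io \<in> A1" by blast
      show False
      proof (cases "b \<ge> 4")
        case True
        have "4 + 0 \<le> card A2" using True unfolding b_def by simp

        then obtain x1 x2 x3 x4 where xs: "x1 \<in> A2" "x2 \<in> A2" "x3 \<in> A2" "x4 \<in> A2" "distinct [x1, x2, x3, x4]" and "0 \<le> card (A2 - {x1, x2, x3, x4})"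

          by (rule pick4[OF fin(2)])
        have "io \<notin> A2" using io disj by auto
        have d: "distinct [x1, x2, x3, x4, io, r]" using xs io \<open>io \<notin> A2\<close> rA1 rA2 by auto
        have S: "{x1, x2, x3, x4, io, r} \<subseteq> {1..r}" using xs io rI A1I A2I by auto
        show False
          by (rule T2a[OF osb d S]) (simp_all add: xs io A1v A2v t3)
      next
        case b3: False
        show False
        proof (cases "a = 3")
          case True
          have b2: "2 \<le> card A2" using ab5 True unfolding b_def by simp
          have "2 + 0 \<le> card A2" using b2 by simp

          then obtain x1 x2 where xs: "x1 \<in> A2" "x2 \<in> A2" "x1 \<noteq> x2" and "0 \<le> card (A2 - {x1, x2})"

            by (rule pick2[OF fin(2)])
          have "3 + 0 \<le> card A1" using True unfolding a_def by simp

          then obtain y1 y2 y3 where ys: "y1 \<in> A1" "y2 \<in> A1" "y3 \<in> A1" "distinct [y1, y2, y3]" and "0 \<le> card (A1 - {y1, y2, y3})"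

            by (rule pick3[OF fin(1)])
          have "y1 \<notin> A2" "y2 \<notin> A2" "y3 \<notin> A2" using ys disj by auto
          have d: "distinct [x1, x2, y1, y2, y3, r]"
            using xs ys \<open>y1 \<notin> A2\<close> \<open>y2 \<notin> A2\<close> \<open>y3 \<notin> A2\<close> rA1 rA2 by auto
          have S: "{x1, x2, y1, y2, y3, r} \<subseteq> {1..r}" using xs ys rI A1I A2I by auto
          show False
            by (rule T2b[OF osb d S]) (simp_all add: xs ys A1v A2v t3)
        next
          case False
          then have a2: "a = 2" and b3': "b = 3" using a3' ab5 b3 by auto
          have "2 + 0 \<le> card A1" using a2 unfolding a_def by simp

          then obtain y1 y2 where ys: "y1 \<in> A1" "y2 \<in> A1" "y1 \<noteq> y2" and "0 \<le> card (A1 - {y1, y2})"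

            by (rule pick2[OF fin(1)])
          have "3 + 0 \<le> card A2" using b3' unfolding b_def by simp

          then obtain x1 x2 x3 where xs: "x1 \<in> A2" "x2 \<in> A2" "x3 \<in> A2" "distinct [x1, x2, x3]" and "0 \<le> card (A2 - {x1, x2, x3})"

            by (rule pick3[OF fin(2)])
          have "y1 \<notin> A2" "y2 \<notin> A2" using ys disj by auto
          have d: "distinct [y1, y2, x1, x2, x3, r]"
            using xs ys \<open>y1 \<notin> A2\<close> \<open>y2 \<notin> A2\<close> rA1 rA2 by auto
          have S: "{y1, y2, x1, x2, x3, r} \<subseteq> {1..r}" using xs ys rI A1I A2I by auto
          show False
            by (rule T3[OF osb d S]) (simp_all add: xs ys A1v A2v t3)
        qed
      qed
    qed
  qed
qed


end
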